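(* Let $X$ be a finite connected rack and let $S$ be a minimal element of $\overline{\mathcal{R}(X)}$. Then $\mathcal{R}(X)$ is pure if and only if $\overline{\mathcal{R}(X)}_{\ge S}=\{T\in\overline{\mathcal{R}(X)}: T\supseteq S\}$ is pure.
   Context: A rack is a set $X$ with a binary operation $\triangleright$ such that $a\triangleright(b\triangleright c)=(a\triangleright b)\triangleright(a\triangleright c)$ for all $a,b,c$, and each map $\phi_a\colon x\mapsto a\triangleright x$ is a bijection of $X$. Subracks are subsets closed under $\triangleright$ (including $\emptyset$); $\mathcal{R}(X)$ is the lattice of subracks under inclusion and $\overline{\mathcal{R}(X)}=\mathcal{R}(X)\setminus\{X,\emptyset\}$. $\mathsf{Inn}(X)=\langle\phi_a:a\in X\rangle$, and $X$ is connected if $\mathsf{Inn}(X)$ acts transitively on $X$. A finite poset is pure if all of its maximal chains have the same length. *)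

theory Defs
  imports Main
begin

definition rack :: "'a set \<Rightarrow> ('a \<Rightarrow> 'a \<Rightarrow> 'a) \<Rightarrow> bool" where
  "rack X op \<longleftrightarrow>
     (\<forall>a\<in>X. \<forall>b\<in>X. op a b \<in> X) \<and>
     (\<forall>a\<in>X. \<forall>b\<in>X. \<forall>c\<in>X. op a (op b c) = op (op a b) (op a c)) \<and>
     (\<forall>a\<in>X. bij_betw (op a) X X)"

inductive_set Inn :: "'a set \<Rightarrow> ('a \<Rightarrow> 'a \<Rightarrow> 'a) \<Rightarrow> ('a \<Rightarrow> 'a) set"
  for X op where
  Inn_id: "id \<in> Inn X op"
| Inn_phi: "g \<in> Inn X op \<Longrightarrow> a \<in> X \<Longrightarrow> op a \<circ> g \<in> Inn X op"
| Inn_phi_inv: "g \<in> Inn X op \<Longrightarrow> a \<in> X \<Longrightarrow> inv_into X (op a) \<circ> g \<in> Inn X op"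

definition rack_connected :: "'a set \<Rightarrow> ('a \<Rightarrow> 'a \<Rightarrow> 'a) \<Rightarrow> bool" where
  "rack_connected X op \<longleftrightarrow> (\<forall>x\<in>X. \<forall>y\<in>X. \<exists>g\<in>Inn X op. g x = y)"

text \<open>Subracks (including the empty set) and the lattice R(X).\<close>
definition subracks :: "'a set \<Rightarrow> ('a \<Rightarrow> 'a \<Rightarrow> 'a) \<Rightarrow> 'a set set" where
  "subracks X op = {S. S \<subseteq> X \<and> (\<forall>a\<in>S. \<forall>b\<in>S. op a b \<in> S)}"

definition proper_subracks :: "'a set \<Rightarrow> ('a \<Rightarrow> 'a \<Rightarrow> 'a) \<Rightarrow> 'a set set" where
  "proper_subracks X op = subracks X op - {X, {}}"

definition incl_chain :: "'a set set \<Rightarrow> 'a set set \<Rightarrow> bool" where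
  "incl_chain P C \<longleftrightarrow> C \<subseteq> P \<and> (\<forall>A\<in>C. \<forall>B\<in>C. A \<subseteq> B \<or> B \<subseteq> A)"

definition incl_maxchain :: "'a set set \<Rightarrow> 'a set set \<Rightarrow> bool" where
  "incl_maxchain P C \<longleftrightarrow> incl_chain P C \<and> (\<forall>D. incl_chain P D \<and> C \<subseteq> D \<longrightarrow> D = C)"

text \<open>A finite poset (here: a finite family of sets under inclusion) is pure if all
  its maximal chains have the same length (equivalently, the same cardinality).\<close>
definition pure :: "'a set set \<Rightarrow> bool" where
  "pure P \<longleftrightarrow> (\<forall>C D. incl_maxchain P C \<and> incl_maxchain P D \<longrightarrow> card C = card D)"

end

theory Submission
  imports Defs
begin

lemma comp_remove:
  assumes fin: "finite U" and t: "t \<in> U" and cmp: "\<forall>x\<in>U. x \<subseteq> t \<or> t \<subseteq> x"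
  shows "pure U \<longleftrightarrow> pure (U - {t})"
proof -
  have A: "t \<in> D \<and> incl_maxchain (U - {t}) (D - {t})" if D: "incl_maxchain U D" for D
  proof -
    have "incl_chain U (insert t D)" using D t cmp unfolding incl_maxchain_def incl_chain_def by blast
    hence tD: "t \<in> D" using D unfolding incl_maxchain_def by blast
    have "incl_maxchain (U - {t}) (D - {t})"
      unfolding incl_maxchain_def
    proof (intro conjI allI impI)
      show "incl_chain (U - {t}) (D - {t})" using D unfolding incl_maxchain_def incl_chain_def by blast
      fix E assume E: "incl_chain (U - {t}) E \<and> D - {t} \<subseteq> E"
      have "incl_chain U (insert t E)" using E t cmp unfolding incl_chain_def by blast
      moreover have "D \<subseteq> insert t E" using E by blast
      ultimately have "insert t E = D" using D unfolding incl_maxchain_def by blast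
      moreover have "t \<notin> E" using E unfolding incl_chain_def by blast
      ultimately show "E = D - {t}" by blast
    qed
    with tD show ?thesis by blast
  qed
  have B: "incl_maxchain U (insert t C) \<and> t \<notin> C" if C: "incl_maxchain (U - {t}) C" for C
  proof -
    have tC: "t \<notin> C" using C unfolding incl_maxchain_def incl_chain_def by blast
    have "incl_maxchain U (insert t C)" unfolding incl_maxchain_def
    proof (intro conjI allI impI)
      show "incl_chain U (insert t C)" using C t cmp unfolding incl_maxchain_def incl_chain_def by blast
      fix E assume E: "incl_chain U E \<and> insert t C \<subseteq> E"
      have "incl_chain (U - {t}) (E - {t})" using E unfolding incl_chain_def by blast
      moreover have "C \<subseteq> E - {t}" using E tC by blast
      ultimately have "E - {t} = C" using C unfolding incl_maxchain_def by blast
      thus "E = insert t C" using E by blast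
    qed
    with tC show ?thesis by blast
  qed
  have finch: "finite D" if "incl_maxchain V D" "V \<subseteq> U" for V D
    using that fin unfolding incl_maxchain_def incl_chain_def by (meson finite_subset)
  show ?thesis
  proof
    assume p: "pure U"
    show "pure (U - {t})" unfolding pure_def
    proof (intro allI impI)
      fix C D assume CD: "incl_maxchain (U - {t}) C \<and> incl_maxchain (U - {t}) D"
      with B have "incl_maxchain U (insert t C)" "t \<notin> C" "incl_maxchain U (insert t D)" "t \<notin> D" by auto
      moreover have "finite C" "finite D" using CD finch[of "U - {t}"] by auto
      ultimately show "card C = card D" using p unfolding pure_def
        by (metis card_insert_disjoint Suc_inject)
    qed
  next
    assume p: "pure (U - {t})"
    show "pure U" unfolding pure_def
    proof (intro allI impI)
      fix C D assume CD: "incl_maxchain U C \<and> incl_maxchain U D"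
      with A have "incl_maxchain (U - {t}) (C - {t})" "t \<in> C" "incl_maxchain (U - {t}) (D - {t})" "t \<in> D" by auto
      moreover have "finite C" "finite D" using CD finch[of U] by auto
      ultimately show "card C = card D" using p unfolding pure_def
        by (metis card_Diff_singleton card.remove)
    qed
  qed
qed

lemma chain_min: "finite C \<Longrightarrow> C \<noteq> {} \<Longrightarrow> \<forall>A\<in>C. \<forall>B\<in>C. A \<subseteq> B \<or> B \<subseteq> A \<Longrightarrow> \<exists>m\<in>C. \<forall>c\<in>C. m \<subseteq> (c::'a set)"
proof (induction C rule: finite_ne_induct)
  case (singleton x) thus ?case by auto
next
  case (insert x F)
  then obtain m where m: "m \<in> F" "\<forall>c\<in>F. m \<subseteq> c" by auto
  show ?case
  proof (cases "x \<subseteq> m")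
    case True
    have "\<forall>c\<in>insert x F. x \<subseteq> c" using True m(2) by (auto intro: order_trans)
    thus ?thesis by blast
  next
    case False hence "m \<subseteq> x" using insert.prems m(1) by auto
    hence "\<forall>c\<in>insert x F. m \<subseteq> c" using m(2) by simp
    thus ?thesis using m(1) by blast
  qed
qed

definition atom :: "'a set set \<Rightarrow> 'a set \<Rightarrow> bool" where
  "atom P M \<longleftrightarrow> M \<in> P \<and> M \<noteq> {} \<and> (\<forall>T\<in>P. T \<subseteq> M \<longrightarrow> T \<noteq> {} \<longrightarrow> T = M)"

lemma main_comb:
  assumes fin: "finite P" and emp: "{} \<in> P" and top: "X \<in> P" and sub: "\<forall>T\<in>P. T \<subseteq> X"
    and aS: "atom P S" and SX: "S \<noteq> X"
    and sym: "\<And>M M'. atom P M \<Longrightarrow> atom P M' \<Longrightarrow> \<exists>f g. (\<forall>x\<in>X. g (f x) = x \<and> f (g x) = x)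
        \<and> (\<forall>T\<in>P. f ` T \<in> P \<and> g ` T \<in> P) \<and> f ` M = M'"
  shows "pure P \<longleftrightarrow> pure {T \<in> P - {X, {}}. S \<subseteq> T}"
proof -
  define P' where "P' = P - {{}}"
  define U where "U M = {T \<in> P'. M \<subseteq> T}" for M
  have S0: "S \<noteq> {}" "S \<in> P" using aS unfolding atom_def by auto
  have X0: "X \<noteq> {}" using S0 sub by blast
  have step1: "pure P \<longleftrightarrow> pure P'" unfolding P'_def
    by (rule comp_remove[OF fin emp]) blast
  have step3: "pure (U S) \<longleftrightarrow> pure (U S - {X})"
    by (rule comp_remove) (use fin sub top X0 S0 in \<open>auto simp: U_def P'_def\<close>)
  have eq3: "U S - {X} = {T \<in> P - {X, {}}. S \<subseteq> T}" unfolding U_def P'_def by auto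
  have a: "incl_maxchain P' C" if M: "atom P M" and C: "incl_maxchain (U M) C" for M C
  proof -
    have MU: "M \<in> U M" using M unfolding atom_def U_def P'_def by auto
    have "incl_chain (U M) (insert M C)" using C MU unfolding incl_maxchain_def incl_chain_def U_def by blast
    hence MC: "M \<in> C" using C unfolding incl_maxchain_def by blast
    show ?thesis unfolding incl_maxchain_def
    proof (intro conjI allI impI)
      show "incl_chain P' C" using C unfolding incl_maxchain_def incl_chain_def U_def by blast
      fix E assume E: "incl_chain P' E \<and> C \<subseteq> E"
      have "E \<subseteq> U M"
      proof
        fix e assume e: "e \<in> E"
        hence "e \<subseteq> M \<or> M \<subseteq> e" using E MC unfolding incl_chain_def by blast
        moreover have "e \<in> P" "e \<noteq> {}" using e E unfolding incl_chain_def P'_def by auto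
        ultimately have "M \<subseteq> e" using M unfolding atom_def by blast
        thus "e \<in> U M" using e E unfolding U_def incl_chain_def by blast
      qed
      hence "incl_chain (U M) E" using E unfolding incl_chain_def by blast
      thus "E = C" using E C unfolding incl_maxchain_def by blast
    qed
  qed
  have b: "\<exists>M. atom P M \<and> incl_maxchain (U M) C" if C: "incl_maxchain P' C" for C
  proof -
    have CP: "C \<subseteq> P'" and cmpC: "\<forall>A\<in>C. \<forall>B\<in>C. A \<subseteq> B \<or> B \<subseteq> A"
      and maxC: "\<forall>D. incl_chain P' D \<and> C \<subseteq> D \<longrightarrow> D = C"
      using C unfolding incl_maxchain_def incl_chain_def by simp_all
    have XP: "X \<in> P'" by (simp add: P'_def top X0)
    have CX: "\<forall>c\<in>C. c \<subseteq> X" using CP sub unfolding P'_def by auto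
    have "incl_chain P' (insert X C)" unfolding incl_chain_def using CP cmpC XP CX by auto
    hence XC: "X \<in> C" using maxC by auto
    have finC: "finite C" using CP fin unfolding P'_def by (metis finite_subset finite_Diff)
    obtain m where m: "m \<in> C" "\<forall>c\<in>C. m \<subseteq> c"
      using chain_min[OF finC _ cmpC] XC by blast
    have mP: "m \<in> P" "m \<noteq> {}" using m CP unfolding P'_def by auto
    have am: "atom P m" unfolding atom_def
    proof (intro conjI ballI impI)
      fix T assume T: "T \<in> P" "T \<subseteq> m" "T \<noteq> {}"
      have Tc: "\<forall>c\<in>C. T \<subseteq> c" using m T(2) by blast
      have "T \<in> P'" using T unfolding P'_def by simp
      hence "incl_chain P' (insert T C)" unfolding incl_chain_def using CP cmpC Tc by auto
      hence "T \<in> C" using maxC by auto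
      thus "T = m" using m T by blast
    qed (use mP in auto)
    have "incl_maxchain (U m) C" unfolding incl_maxchain_def
    proof (intro conjI allI impI)
      have "C \<subseteq> U m" using CP m unfolding U_def by auto
      thus "incl_chain (U m) C" using cmpC unfolding incl_chain_def by simp
      fix E assume E: "incl_chain (U m) E \<and> C \<subseteq> E"
      hence "incl_chain P' E" unfolding incl_chain_def U_def by auto
      thus "E = C" using E maxC by auto
    qed
    with am show ?thesis by blast
  qed
  have c: "\<exists>C'. incl_maxchain (U M') C' \<and> card C' = card C"
    if M: "atom P M" and M': "atom P M'" and C: "incl_maxchain (U M) C" for M M' C
  proof -
    obtain f g where fg: "\<forall>x\<in>X. g (f x) = x \<and> f (g x) = x"
      and cl: "\<forall>T\<in>P. f ` T \<in> P \<and> g ` T \<in> P" and fM: "f ` M = M'"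
      using sym[OF M M'] by blast
    have gf: "g ` (f ` T) = T" if "T \<in> P" for T
    proof -
      have "T \<subseteq> X" using sub that by blast
      thus ?thesis using fg by (force simp: image_image)
    qed
    have fgT: "f ` (g ` T) = T" if "T \<in> P" for T
    proof -
      have "T \<subseteq> X" using sub that by blast
      thus ?thesis using fg by (force simp: image_image)
    qed
    have MP: "M \<in> P" using M unfolding atom_def by auto
    have gM: "g ` M' = M" using gf[OF MP] fM by simp
    have CU: "C \<subseteq> U M" using C unfolding incl_maxchain_def incl_chain_def by blast
    define C' where "C' = (\<lambda>T. f ` T) ` C"
    have inj: "inj_on (\<lambda>T. f ` T) C"
    proof (rule inj_onI)
      fix x y assume "x \<in> C" "y \<in> C" "f ` x = f ` y"
      moreover have "x \<in> P" "y \<in> P" using \<open>x \<in> C\<close> \<open>y \<in> C\<close> CU unfolding U_def P'_def by auto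
      ultimately show "x = y" using gf by metis
    qed
    have "incl_maxchain (U M') C'" unfolding incl_maxchain_def
    proof (intro conjI allI impI)
      show "incl_chain (U M') C'" unfolding incl_chain_def
      proof (intro conjI ballI)
        show "C' \<subseteq> U M'"
        proof
          fix y assume "y \<in> C'"
          then obtain T where T: "T \<in> C" "y = f ` T" unfolding C'_def by blast
          have "T \<in> P" "T \<noteq> {}" "M \<subseteq> T" using T CU unfolding U_def P'_def by auto
          thus "y \<in> U M'" using T cl fM unfolding U_def P'_def by auto
        qed
        fix A B assume "A \<in> C'" "B \<in> C'"
        then obtain A0 B0 where AB: "A0 \<in> C" "B0 \<in> C" "A = f ` A0" "B = f ` B0" unfolding C'_def by blast
        have "A0 \<subseteq> B0 \<or> B0 \<subseteq> A0" using C AB(1,2) unfolding incl_maxchain_def incl_chain_def by blast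
        thus "A \<subseteq> B \<or> B \<subseteq> A" unfolding AB(3,4) using image_mono by blast
      qed
      fix E assume E: "incl_chain (U M') E \<and> C' \<subseteq> E"
      define E0 where "E0 = (\<lambda>T. g ` T) ` E"
      have EU: "E \<subseteq> U M'" using E unfolding incl_chain_def by blast
      have "incl_chain (U M) E0" unfolding incl_chain_def
      proof (intro conjI ballI)
        show "E0 \<subseteq> U M"
        proof
          fix y assume "y \<in> E0"
          then obtain T where T: "T \<in> E" "y = g ` T" unfolding E0_def by blast
          have "T \<in> P" "T \<noteq> {}" "M' \<subseteq> T" using T EU unfolding U_def P'_def by auto
          thus "y \<in> U M" using T cl gM unfolding U_def P'_def by auto
        qed
        fix A B assume "A \<in> E0" "B \<in> E0"
        then obtain A0 B0 where AB: "A0 \<in> E" "B0 \<in> E" "A = g ` A0" "B = g ` B0" unfolding E0_def by blast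
        have "A0 \<subseteq> B0 \<or> B0 \<subseteq> A0" using E AB(1,2) unfolding incl_chain_def by blast
        thus "A \<subseteq> B \<or> B \<subseteq> A" unfolding AB(3,4) using image_mono by blast
      qed
      moreover have "C \<subseteq> E0"
      proof
        fix T assume T: "T \<in> C"
        hence "T \<in> P" using CU unfolding U_def P'_def by auto
        hence "T = g ` (f ` T)" using gf by simp
        moreover have "f ` T \<in> E" using E T unfolding C'_def by blast
        ultimately show "T \<in> E0" unfolding E0_def by blast
      qed
      ultimately have "E0 = C" using C unfolding incl_maxchain_def by blast
      hence "(\<lambda>T. f ` T) ` E0 = C'" unfolding C'_def by simp
      moreover have "(\<lambda>T. f ` T) ` E0 = E"
      proof -
        have "(\<lambda>T. f ` T) ` E0 = (\<lambda>T. f ` (g ` T)) ` E" unfolding E0_def by (simp add: image_image)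
        also have "\<dots> = E"
        proof -
          have "\<forall>T\<in>E. f ` g ` T = T" using fgT EU unfolding U_def P'_def by auto
          hence "(\<lambda>T. f ` (g ` T)) ` E = id ` E" by (intro image_cong) auto
          thus ?thesis by simp
        qed
        finally show ?thesis .
      qed
      ultimately show "E = C'" by simp
    qed
    moreover have "card C' = card C" unfolding C'_def using inj by (simp add: card_image)
    ultimately show ?thesis by blast
  qed
  have step2: "pure P' \<longleftrightarrow> pure (U S)"
  proof
    assume p: "pure P'"
    show "pure (U S)" unfolding pure_def using p a[OF aS] unfolding pure_def by blast
  next
    assume p: "pure (U S)"
    show "pure P'" unfolding pure_def
    proof (intro allI impI)
      fix C D assume "incl_maxchain P' C \<and> incl_maxchain P' D"
      then obtain M N where "atom P M" "incl_maxchain (U M) C" "atom P N" "incl_maxchain (U N) D"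
        using b by blast
      then obtain C1 D1 where "incl_maxchain (U S) C1" "card C1 = card C"
        "incl_maxchain (U S) D1" "card D1 = card D" using c aS by metis
      thus "card C = card D" using p unfolding pure_def by metis
    qed
  qed
  show ?thesis using step1 step2 step3 eq3 by simp
qed

definition rhom :: "'a set \<Rightarrow> ('a \<Rightarrow> 'a \<Rightarrow> 'a) \<Rightarrow> ('a \<Rightarrow> 'a) \<Rightarrow> bool" where
  "rhom X op f \<longleftrightarrow> (\<forall>x\<in>X. \<forall>y\<in>X. f (op x y) = op (f x) (f y))"

lemma inv_rhom:
  assumes b: "bij_betw f X X" and h: "rhom X op f" and cl: "\<forall>x\<in>X. \<forall>y\<in>X. op x y \<in> X"
  shows "rhom X op (inv_into X f)"
  unfolding rhom_def
proof (intro ballI)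
  fix x y assume x: "x \<in> X" and y: "y \<in> X"
  define x' where "x' = inv_into X f x"
  define y' where "y' = inv_into X f y"
  have x'X: "x' \<in> X" "f x' = x" using x b unfolding x'_def bij_betw_def
    by (auto intro: inv_into_into f_inv_into_f)
  have y'X: "y' \<in> X" "f y' = y" using y b unfolding y'_def bij_betw_def
    by (auto intro: inv_into_into f_inv_into_f)
  have "f (op x' y') = op x y" using h x'X y'X unfolding rhom_def by metis
  moreover have "op x' y' \<in> X" using cl x'X y'X by blast
  ultimately have "inv_into X f (op x y) = op x' y'" using b unfolding bij_betw_def
    by (metis inv_into_f_f)
  thus "inv_into X f (op x y) = op (inv_into X f x) (inv_into X f y)" unfolding x'_def y'_def .
qed

lemma Inn_props:
  assumes "g \<in> Inn X op" and r: "rack X op"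
  shows "bij_betw g X X \<and> rhom X op g"
  using assms(1)
proof induction
  case Inn_id
  then show ?case by (simp add: rhom_def bij_betw_id[unfolded id_def])
next
  case (Inn_phi g a)
  have ba: "bij_betw (op a) X X" using r Inn_phi.hyps(2) unfolding rack_def by (elim conjE) blast
  have "bij_betw (op a \<circ> g) X X" using Inn_phi.IH ba by (metis bij_betw_trans)
  moreover have "rhom X op (op a \<circ> g)" unfolding rhom_def
  proof (intro ballI)
    fix x y assume x: "x \<in> X" and y: "y \<in> X"
    have gx: "g x \<in> X" "g y \<in> X" using Inn_phi.IH x y unfolding bij_betw_def by auto
    have "g (op x y) = op (g x) (g y)" using Inn_phi.IH x y unfolding rhom_def by blast
    moreover have "op a (op (g x) (g y)) = op (op a (g x)) (op a (g y))"
    proof -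
      have "\<forall>a\<in>X. \<forall>b\<in>X. \<forall>c\<in>X. op a (op b c) = op (op a b) (op a c)"
        using r unfolding rack_def by (elim conjE)
      thus ?thesis using Inn_phi.hyps(2) gx by blast
    qed
    ultimately show "(op a \<circ> g) (op x y) = op ((op a \<circ> g) x) ((op a \<circ> g) y)"
      by simp
  qed
  ultimately show ?case by blast
next
  case (Inn_phi_inv g a)
  have ba: "bij_betw (op a) X X" using r Inn_phi_inv.hyps(2) unfolding rack_def by (elim conjE) blast
  have cl: "\<forall>x\<in>X. \<forall>y\<in>X. op x y \<in> X" using r unfolding rack_def by (elim conjE)
  have ha: "rhom X op (op a)"
  proof -
    have "\<forall>a\<in>X. \<forall>b\<in>X. \<forall>c\<in>X. op a (op b c) = op (op a b) (op a c)"
      using r unfolding rack_def by (elim conjE)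
    thus ?thesis using Inn_phi_inv.hyps(2) unfolding rhom_def by blast
  qed
  have bi: "bij_betw (inv_into X (op a)) X X" using ba by (rule bij_betw_inv_into)
  have hi: "rhom X op (inv_into X (op a))" using inv_rhom[OF ba ha cl] .
  have "bij_betw (inv_into X (op a) \<circ> g) X X" using Inn_phi_inv.IH bi by (metis bij_betw_trans)
  moreover have "rhom X op (inv_into X (op a) \<circ> g)" unfolding rhom_def
  proof (intro ballI)
    fix x y assume x: "x \<in> X" and y: "y \<in> X"
    have gx: "g x \<in> X" "g y \<in> X" using Inn_phi_inv.IH x y unfolding bij_betw_def by auto
    have "g (op x y) = op (g x) (g y)" using Inn_phi_inv.IH x y unfolding rhom_def by blast
    thus "(inv_into X (op a) \<circ> g) (op x y) = op ((inv_into X (op a) \<circ> g) x) ((inv_into X (op a) \<circ> g) y)"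
      using hi gx unfolding rhom_def by simp
  qed
  ultimately show ?case by blast
qed

lemma subrack_image:
  assumes "T \<in> subracks X op" "bij_betw f X X" "rhom X op f"
  shows "f ` T \<in> subracks X op"
proof -
  have TX: "T \<subseteq> X" using assms(1) unfolding subracks_def by blast
  have "f ` T \<subseteq> X" using TX assms(2) unfolding bij_betw_def by blast
  moreover have "\<forall>a\<in>f ` T. \<forall>b\<in>f ` T. op a b \<in> f ` T"
  proof (intro ballI)
    fix a b assume "a \<in> f ` T" "b \<in> f ` T"
    then obtain a0 b0 where ab: "a0 \<in> T" "b0 \<in> T" "a = f a0" "b = f b0" by blast
    have "op a0 b0 \<in> T" using assms(1) ab unfolding subracks_def by blast
    moreover have "f (op a0 b0) = op a b" using assms(3) ab TX unfolding rhom_def by blast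
    ultimately show "op a b \<in> f ` T" by (metis imageI)
  qed
  ultimately show ?thesis unfolding subracks_def by blast
qed

lemma subrack_int: "A \<in> subracks X op \<Longrightarrow> B \<in> subracks X op \<Longrightarrow> A \<inter> B \<in> subracks X op"
  unfolding subracks_def by blast

theorem mainTheorem6:
  fixes X :: "'a set" and op :: "'a \<Rightarrow> 'a \<Rightarrow> 'a" and S :: "'a set"
  assumes "rack X op" and "finite X" and "rack_connected X op"
    and "S \<in> proper_subracks X op"
    and "\<forall>T\<in>proper_subracks X op. T \<subseteq> S \<longrightarrow> T = S"
  shows "pure (subracks X op) \<longleftrightarrow> pure {T \<in> proper_subracks X op. S \<subseteq> T}"
proof -
  let ?P = "subracks X op"
  have r: "rack X op" by fact
  have fin: "finite ?P"
  proof -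
    have "?P \<subseteq> Pow X" unfolding subracks_def by blast
    thus ?thesis using assms(2) by (meson finite_Pow_iff finite_subset)
  qed
  have emp: "{} \<in> ?P" unfolding subracks_def by blast
  have top: "X \<in> ?P" using r unfolding subracks_def rack_def by blast
  have sub: "\<forall>T\<in>?P. T \<subseteq> X" unfolding subracks_def by blast
  have SP: "S \<in> ?P" "S \<noteq> X" "S \<noteq> {}" using assms(4) unfolding proper_subracks_def by auto
  have aS: "atom ?P S" unfolding atom_def
  proof (intro conjI ballI impI)
    fix T assume T: "T \<in> ?P" "T \<subseteq> S" "T \<noteq> {}"
    have "T \<noteq> X" using T(2) SP sub by blast
    hence "T \<in> proper_subracks X op" using T unfolding proper_subracks_def by blast
    thus "T = S" using assms(5) T by blast
  qed (use SP in auto)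
  have sym: "\<exists>f g. (\<forall>x\<in>X. g (f x) = x \<and> f (g x) = x)
        \<and> (\<forall>T\<in>?P. f ` T \<in> ?P \<and> g ` T \<in> ?P) \<and> f ` M = M'"
    if M: "atom ?P M" and M': "atom ?P M'" for M M'
  proof -
    obtain x where x: "x \<in> M" using M unfolding atom_def by blast
    obtain y where y: "y \<in> M'" using M' unfolding atom_def by blast
    have MX: "M \<subseteq> X" "M' \<subseteq> X" using M M' sub unfolding atom_def by auto
    obtain f where f: "f \<in> Inn X op" "f x = y"
      using assms(3) x y MX unfolding rack_connected_def by blast
    have fp: "bij_betw f X X" "rhom X op f" using Inn_props[OF f(1) r] by auto
    define g where "g = inv_into X f"
    have cl: "\<forall>x\<in>X. \<forall>y\<in>X. op x y \<in> X" using r unfolding rack_def by blast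
    have gp: "bij_betw g X X" "rhom X op g" unfolding g_def
      using bij_betw_inv_into[OF fp(1)] inv_rhom[OF fp cl] by auto
    have inv: "\<forall>x\<in>X. g (f x) = x \<and> f (g x) = x" unfolding g_def
    proof
      fix z assume z: "z \<in> X"
      have i: "inj_on f X" and s: "f ` X = X" using fp(1) unfolding bij_betw_def by auto
      have "z \<in> f ` X" using s z by simp
      thus "inv_into X f (f z) = z \<and> f (inv_into X f z) = z"
        using inv_into_f_f[OF i z] f_inv_into_f by simp
    qed
    have gy: "g y = x" using inv x MX f(2) by (metis subsetD)
    have Pim: "\<forall>T\<in>?P. f ` T \<in> ?P \<and> g ` T \<in> ?P" using subrack_image fp gp by blast
    have MP: "M \<in> ?P" "M' \<in> ?P" using M M' unfolding atom_def by auto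
    have "M' \<inter> f ` M \<in> ?P" using subrack_int MP Pim by blast
    moreover have "y \<in> M' \<inter> f ` M" using x y f(2) by blast
    ultimately have "M' \<inter> f ` M = M'" using M' unfolding atom_def by (metis empty_iff inf_le1)
    hence s1: "M' \<subseteq> f ` M" by blast
    have "M \<inter> g ` M' \<in> ?P" using subrack_int MP Pim by blast
    moreover have "x \<in> M \<inter> g ` M'" using x y gy by blast
    ultimately have "M \<inter> g ` M' = M" using M unfolding atom_def by (metis empty_iff inf_le1)
    hence "M \<subseteq> g ` M'" by blast
    hence "f ` M \<subseteq> f ` g ` M'" by blast
    also have "f ` g ` M' = M'" using inv MX by (force simp: image_image)
    finally have "f ` M = M'" using s1 by blast
    thus ?thesis using inv Pim by blast
  qed
  have eq: "{T \<in> proper_subracks X op. S \<subseteq> T} = {T \<in> ?P - {X, {}}. S \<subseteq> T}"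
    unfolding proper_subracks_def by simp
  show ?thesis unfolding eq
    by (rule main_comb[OF fin emp top sub aS SP(2) sym])
qed

end
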